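(* Let $X$ be a zero-dimensional compact metric space and $T:X\to X$ an aperiodic surjective local homeomorphism with $|Sp_l(X,T)|<\infty$. Then \[{\rm dim}_{\rm Rok}(X,T)\le 2|Sp_l(X,T)|+1.\]
   Context: Aperiodic: no $x$ with $T^n(x)=x$, $n\ge1$. $Sp_l(X,T)=\{x: |T^{-1}(\{x\})|\ge2\}$. For $N\ge1$, an $N$-Rokhlin tower is a collection $\{U_0,\dots,U_{N-1}\}$ of nonempty subsets of $X$ with $U_k=T^{-1}(U_{k-1})$ for $k=1,\dots,N-1$ and $\overline{U_i}\cap\overline{U_j}=\varnothing$ for $i\ne j$; it is open if all $U_i$ are open. ${\rm dim}_{\rm Rok}(X,T)\le d$ means: for every $N\ge1$ there are at most $d+1$ open $N$-Rokhlin towers whose members together cover $X$. ${\rm dim}_{\rm Rok}(X,T)$ is the least such $d$ ($\infty$ if none). *)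

theory Defs
  imports "HOL-Analysis.Analysis"
begin

definition zero_dimensional :: "'a::metric_space set \<Rightarrow> bool" where
  "zero_dimensional X \<longleftrightarrow>
     (\<forall>U x. openin (top_of_set X) U \<and> x \<in> U \<longrightarrow>
        (\<exists>V. openin (top_of_set X) V \<and> closedin (top_of_set X) V \<and> x \<in> V \<and> V \<subseteq> U))"

definition local_homeomorphism :: "'a::metric_space set \<Rightarrow> ('a \<Rightarrow> 'a) \<Rightarrow> bool" where
  "local_homeomorphism X T \<longleftrightarrow> T ` X \<subseteq> X \<and>
     (\<forall>x\<in>X. \<exists>U. openin (top_of_set X) U \<and> x \<in> U \<and> openin (top_of_set X) (T ` U) \<and>
        (\<exists>g. homeomorphism U (T ` U) T g))"

definition aperiodic :: "'a set \<Rightarrow> ('a \<Rightarrow> 'a) \<Rightarrow> bool" where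
  "aperiodic X T \<longleftrightarrow> (\<forall>x\<in>X. \<forall>n::nat. n \<ge> 1 \<longrightarrow> (T ^^ n) x \<noteq> x)"

definition Sp_l :: "'a set \<Rightarrow> ('a \<Rightarrow> 'a) \<Rightarrow> 'a set" where
  "Sp_l X T = {x \<in> X. \<exists>y\<in>X. \<exists>z\<in>X. y \<noteq> z \<and> T y = x \<and> T z = x}"

definition open_rokhlin_tower :: "'a::metric_space set \<Rightarrow> ('a \<Rightarrow> 'a) \<Rightarrow> nat \<Rightarrow> (nat \<Rightarrow> 'a set) \<Rightarrow> bool" where
  "open_rokhlin_tower X T N U \<longleftrightarrow>
     (\<forall>k<N. U k \<noteq> {} \<and> U k \<subseteq> X \<and> openin (top_of_set X) (U k)) \<and>
     (\<forall>k. 1 \<le> k \<and> k < N \<longrightarrow> U k = {x \<in> X. T x \<in> U (k - 1)}) \<and>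
     (\<forall>i<N. \<forall>j<N. i \<noteq> j \<longrightarrow> closure (U i) \<inter> closure (U j) = {})"

definition rokhlin_dim_le :: "'a::metric_space set \<Rightarrow> ('a \<Rightarrow> 'a) \<Rightarrow> nat \<Rightarrow> bool" where
  "rokhlin_dim_le X T d \<longleftrightarrow>
     (\<forall>N::nat. N \<ge> 1 \<longrightarrow>
        (\<exists>m::nat. \<exists>tw :: nat \<Rightarrow> nat \<Rightarrow> 'a set. m \<le> d + 1 \<and>
           (\<forall>i<m. open_rokhlin_tower X T N (tw i)) \<and>
           (\<Union>i<m. \<Union>k<N. tw i k) = X))"

end

theory Submission
  imports Defs
begin

lemma lh_cont:
  assumes "local_homeomorphism X T"
  shows "continuous_on X T"
proof -
  have img: "T ` X \<subseteq> X" using assms unfolding local_homeomorphism_def by blast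
  have "openin (top_of_set X) (X \<inter> T -` W)" if W: "openin (top_of_set X) W" for W
  proof (subst openin_subopen, intro ballI)
    fix x assume x: "x \<in> X \<inter> T -` W"
    then obtain U g where U: "openin (top_of_set X) U" "x \<in> U" "homeomorphism U (T ` U) T g"
      using assms unfolding local_homeomorphism_def by blast
    have cU: "continuous_on U T" using U(3) homeomorphism_cont1 by blast
    have UX: "U \<subseteq> X" using U(1) openin_imp_subset by blast
    have "W \<inter> T ` U \<subseteq> T ` U" by blast
    obtain Ob where Ob: "open Ob" "W = X \<inter> Ob" using W openin_open by blast
    have "W \<inter> T ` U = T ` U \<inter> Ob" using Ob(2) img UX by blast
    then have "openin (top_of_set (T ` U)) (W \<inter> T ` U)"
      using Ob(1) by auto
    then have "openin (top_of_set U) (U \<inter> T -` (W \<inter> T ` U))"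
      using continuous_on_open_gen[of T U "T ` U"] cU by blast
    then have "openin (top_of_set X) (U \<inter> T -` (W \<inter> T ` U))"
      using U(1) openin_trans by blast
    moreover have "x \<in> U \<inter> T -` (W \<inter> T ` U)" using x U by auto
    moreover have "U \<inter> T -` (W \<inter> T ` U) \<subseteq> X \<inter> T -` W" using UX by auto
    ultimately show "\<exists>T'. openin (top_of_set X) T' \<and> x \<in> T' \<and> T' \<subseteq> X \<inter> T -` W" by blast
  qed
  then show ?thesis using continuous_on_open_gen[of T X X] img by blast
qed

lemma lh_open_map:
  assumes "local_homeomorphism X T" "openin (top_of_set X) A"
  shows "openin (top_of_set X) (T ` A)"
proof (subst openin_subopen, intro ballI)
  fix y assume "y \<in> T ` A"
  then obtain x where x: "x \<in> A" "y = T x" by blast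
  have AX: "A \<subseteq> X" using assms(2) openin_imp_subset by blast
  then obtain U g where U: "openin (top_of_set X) U" "x \<in> U" "openin (top_of_set X) (T ` U)" "homeomorphism U (T ` U) T g"
    using assms(1) x unfolding local_homeomorphism_def by blast
  obtain Ob where Ob: "open Ob" "A = X \<inter> Ob" using assms(2) openin_open by blast
  have UX: "U \<subseteq> X" using U(1) openin_imp_subset by blast
  have "A \<inter> U = U \<inter> Ob" using Ob(2) UX by blast
  then have "openin (top_of_set U) (A \<inter> U)"
    using Ob(1) by auto
  then have "openin (top_of_set (T ` U)) (T ` (A \<inter> U))"
    using homeomorphism_imp_open_map U(4) by blast
  then have "openin (top_of_set X) (T ` (A \<inter> U))" using U(3) openin_trans by blast
  then show "\<exists>T'. openin (top_of_set X) T' \<and> y \<in> T' \<and> T' \<subseteq> T ` A" using x U(2) by blast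
qed


definition sparse :: "('a \<Rightarrow> 'a) \<Rightarrow> nat \<Rightarrow> 'a set \<Rightarrow> bool" where
  "sparse T N B \<longleftrightarrow> (\<forall>y\<in>B. \<forall>d. 0 < d \<and> d < N \<longrightarrow> (T ^^ d) y \<notin> B)"

definition clopen_in :: "'a::metric_space set \<Rightarrow> 'a set \<Rightarrow> bool" where
  "clopen_in X A \<longleftrightarrow> openin (top_of_set X) A \<and> closedin (top_of_set X) A"

definition Fz :: "'a set \<Rightarrow> ('a \<Rightarrow> 'a) \<Rightarrow> nat \<Rightarrow> 'a set \<Rightarrow> 'a set" where
  "Fz X T N M = {x\<in>X. \<exists>d. 0 < d \<and> d < N \<and> ((T ^^ d) x \<in> M \<or> (\<exists>y\<in>M. (T ^^ d) y = x))}"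

lemma funpow_in: "T ` X \<subseteq> X \<Longrightarrow> x \<in> X \<Longrightarrow> (T ^^ n) x \<in> X"
  by (induction n) auto

lemma funpow_surj: "T ` X = X \<Longrightarrow> (T ^^ n) ` X = X"
proof (induction n)
  case 0 then show ?case by simp
next
  case (Suc n)
  have "(T ^^ Suc n) ` X = T ` ((T ^^ n) ` X)" by (simp add: image_comp)
  then show ?case using Suc by simp
qed

lemma cont_funpow:
  assumes "continuous_on X T" "T ` X \<subseteq> X"
  shows "continuous_on X (T ^^ n)"
proof (induction n)
  case 0 then show ?case by (simp add: continuous_on_id)
next
  case (Suc n)
  have "(T ^^ n) ` X \<subseteq> X" using funpow_in[OF assms(2)] by blast
  then have "continuous_on ((T ^^ n) ` X) T" using assms(1) continuous_on_subset by blast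
  then have "continuous_on X (T \<circ> (T ^^ n))" using Suc continuous_on_compose by blast
  then show ?case by simp
qed

lemma clopen_preimage:
  assumes "continuous_on X T" "T ` X \<subseteq> X" "clopen_in X A"
  shows "clopen_in X {x\<in>X. (T ^^ n) x \<in> A}"
proof -
  have c: "continuous_on X (T ^^ n)" using cont_funpow assms by blast
  have f: "(T ^^ n) \<in> X \<rightarrow> X" using funpow_in[OF assms(2)] by blast
  have e: "{x\<in>X. (T ^^ n) x \<in> A} = X \<inter> (T ^^ n) -` A" by blast
  have o: "openin (top_of_set X) (X \<inter> (T ^^ n) -` A)"
    using iffD1[OF continuous_on_open_gen[OF f] c] assms(3) unfolding clopen_in_def by blast
  have cl: "closedin (top_of_set X) (X \<inter> (T ^^ n) -` A)"
    using continuous_closedin_preimage_gen[OF c f] assms(3) unfolding clopen_in_def by blast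
  show ?thesis unfolding clopen_in_def e using o cl by blast
qed

lemma clopen_image:
  assumes "local_homeomorphism X T" "compact X" "clopen_in X A"
  shows "clopen_in X ((T ^^ n) ` A)"
proof -
  have img: "T ` X \<subseteq> X" using assms(1) unfolding local_homeomorphism_def by blast
  have ct: "continuous_on X T" using lh_cont assms(1) by blast
  have AX: "A \<subseteq> X" using assms(3) unfolding clopen_in_def using openin_imp_subset by blast
  have o: "openin (top_of_set X) ((T ^^ n) ` A)"
  proof (induction n)
    case 0 then show ?case using assms(3) unfolding clopen_in_def by simp
  next
    case (Suc n)
    have "(T ^^ Suc n) ` A = T ` ((T ^^ n) ` A)" by (simp add: image_comp)
    then show ?case using lh_open_map[OF assms(1) Suc] by simp
  qed
  have "compact A" using closedin_compact assms(2,3) unfolding clopen_in_def by blast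
  moreover have "continuous_on A (T ^^ n)" using cont_funpow[OF ct img] AX continuous_on_subset by blast
  ultimately have "compact ((T ^^ n) ` A)" using compact_continuous_image by blast
  then have "closed ((T ^^ n) ` A)" using compact_imp_closed by blast
  moreover have "(T ^^ n) ` A \<subseteq> X" using funpow_in[OF img] AX by blast
  ultimately have "closedin (top_of_set X) ((T ^^ n) ` A)" using closed_subset by blast
  then show ?thesis using o unfolding clopen_in_def by blast
qed

lemma clopen_UN:
  assumes "finite D" "\<And>d. d \<in> D \<Longrightarrow> clopen_in X (f d)"
  shows "clopen_in X (\<Union>d\<in>D. f d)"
  using assms
proof (induction D rule: finite_induct)
  case empty then show ?case by (simp add: clopen_in_def)
next
  case (insert a D)
  then show ?case unfolding clopen_in_def by (simp add: openin_Un closedin_Un)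
qed

lemma clopen_Un: "clopen_in X A \<Longrightarrow> clopen_in X B \<Longrightarrow> clopen_in X (A \<union> B)"
  unfolding clopen_in_def by (simp add: openin_Un closedin_Un)

lemma clopen_Diff: "clopen_in X A \<Longrightarrow> clopen_in X B \<Longrightarrow> clopen_in X (A - B)"
  unfolding clopen_in_def by (simp add: openin_diff closedin_diff)

lemma Fz_clopen:
  assumes "local_homeomorphism X T" "compact X" "clopen_in X M"
  shows "clopen_in X (Fz X T N M)"
proof -
  have img: "T ` X \<subseteq> X" using assms(1) unfolding local_homeomorphism_def by blast
  have ct: "continuous_on X T" using lh_cont assms(1) by blast
  have MX: "M \<subseteq> X" using assms(3) unfolding clopen_in_def using openin_imp_subset by blast
  have e: "Fz X T N M = (\<Union>d\<in>{0<..<N}. {x\<in>X. (T ^^ d) x \<in> M} \<union> (T ^^ d) ` M)"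
  proof
    show "Fz X T N M \<subseteq> (\<Union>d\<in>{0<..<N}. {x\<in>X. (T ^^ d) x \<in> M} \<union> (T ^^ d) ` M)"
      unfolding Fz_def by auto
    show "(\<Union>d\<in>{0<..<N}. {x\<in>X. (T ^^ d) x \<in> M} \<union> (T ^^ d) ` M) \<subseteq> Fz X T N M"
      unfolding Fz_def using funpow_in[OF img] MX by auto
  qed
  show ?thesis unfolding e
  proof (rule clopen_UN)
    fix d show "clopen_in X ({x\<in>X. (T ^^ d) x \<in> M} \<union> (T ^^ d) ` M)"
      by (rule clopen_Un[OF clopen_preimage[OF ct img assms(3)] clopen_image[OF assms]])
  qed simp
qed

lemma Fz_mono: "M \<subseteq> M' \<Longrightarrow> Fz X T N M \<subseteq> Fz X T N M'"
  unfolding Fz_def by blast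

lemma greedy:
  assumes "local_homeomorphism X T" "compact X" "finite \<V>"
    "\<And>V. V \<in> \<V> \<Longrightarrow> clopen_in X V \<and> sparse T N V"
  shows "\<exists>M. clopen_in X M \<and> sparse T N M \<and> \<Union>\<V> \<subseteq> M \<union> Fz X T N M"
  using assms(3,4)
proof (induction \<V> rule: finite_induct)
  case empty
  then show ?case by (auto simp: clopen_in_def sparse_def)
next
  case (insert V \<V>)
  have "\<exists>M. clopen_in X M \<and> sparse T N M \<and> \<Union>\<V> \<subseteq> M \<union> Fz X T N M"
  proof (rule insert.IH)
    fix W assume "W \<in> \<V>"
    then show "clopen_in X W \<and> sparse T N W" using insert.prems[of W] by simp
  qed
  then obtain M where M: "clopen_in X M" "sparse T N M" "\<Union>\<V> \<subseteq> M \<union> Fz X T N M" by (elim exE conjE)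
  have V: "clopen_in X V" "sparse T N V" using insert.prems by auto
  define M' where "M' = M \<union> (V - Fz X T N M)"
  have VX: "V \<subseteq> X" using V(1) unfolding clopen_in_def using openin_imp_subset by blast
  have c: "clopen_in X M'" unfolding M'_def
    by (intro clopen_Un clopen_Diff M(1) V(1) Fz_clopen[OF assms(1,2) M(1)])
  have s: "sparse T N M'"
    unfolding sparse_def
  proof (intro ballI allI impI)
    fix y d assume y: "y \<in> M'" and d: "0 < d \<and> d < N"
    show "(T ^^ d) y \<notin> M'"
    proof
      assume t: "(T ^^ d) y \<in> M'"
      show False
      proof (cases "y \<in> M")
        case True
        then have "(T ^^ d) y \<notin> M" using M(2) d unfolding sparse_def by blast
        then have "(T ^^ d) y \<in> V - Fz X T N M" using t M'_def by blast
        moreover have "(T ^^ d) y \<in> X" using calculation VX by blast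
        moreover have "(T ^^ d) y \<in> Fz X T N M" unfolding Fz_def
          using True d calculation(2) by blast
        ultimately show False by blast
      next
        case False
        then have yv: "y \<in> V - Fz X T N M" using y M'_def by blast
        then have "(T ^^ d) y \<notin> V" using V(2) d unfolding sparse_def by blast
        then have "(T ^^ d) y \<in> M" using t M'_def by blast
        moreover have "y \<in> X" using yv VX by blast
        ultimately have "y \<in> Fz X T N M" using d unfolding Fz_def by blast
        then show False using yv by blast
      qed
    qed
  qed
  have "Fz X T N M \<subseteq> Fz X T N M'" by (rule Fz_mono) (auto simp: M'_def)
  moreover have "V \<subseteq> M' \<union> Fz X T N M" unfolding M'_def by blast
  moreover have "M \<subseteq> M'" unfolding M'_def by blast
  ultimately have "\<Union>(insert V \<V>) \<subseteq> M' \<union> Fz X T N M'" using M(3) by auto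
  then show ?case using c s by blast
qed


lemma sparse_nbhd:
  assumes "local_homeomorphism X T" "zero_dimensional X" "aperiodic X T" "x \<in> X"
  shows "\<exists>V. clopen_in X V \<and> sparse T N V \<and> x \<in> V"
proof -
  have img: "T ` X \<subseteq> X" using assms(1) unfolding local_homeomorphism_def by blast
  have ct: "continuous_on X T" using lh_cont assms(1) by blast
  have "\<forall>d\<in>{0<..<N}. \<exists>e>0. \<forall>y\<in>X. dist y x < e \<longrightarrow> e \<le> dist ((T ^^ d) y) x"
  proof
    fix d assume d: "d \<in> {0<..<N}"
    have ne: "(T ^^ d) x \<noteq> x" using assms(3,4) d unfolding aperiodic_def by auto
    define r where "r = dist ((T ^^ d) x) x / 2"
    have r: "r > 0" using ne unfolding r_def by simp
    have "continuous_on X (T ^^ d)" using cont_funpow[OF ct img] .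
    then obtain \<delta> where \<delta>: "\<delta> > 0" "\<forall>y\<in>X. dist y x < \<delta> \<longrightarrow> dist ((T ^^ d) y) ((T ^^ d) x) < r"
      using r assms(4) unfolding continuous_on_iff by blast
    have "\<forall>y\<in>X. dist y x < min \<delta> r \<longrightarrow> min \<delta> r \<le> dist ((T ^^ d) y) x"
    proof (intro ballI impI)
      fix y assume "y \<in> X" "dist y x < min \<delta> r"
      then have a: "dist ((T ^^ d) y) ((T ^^ d) x) < r" using \<delta> by auto
      have "dist ((T ^^ d) x) x \<le> dist ((T ^^ d) x) ((T ^^ d) y) + dist ((T ^^ d) y) x"
        by (rule dist_triangle)
      then have "r \<le> dist ((T ^^ d) y) x" using a unfolding r_def by (simp add: dist_commute)
      then show "min \<delta> r \<le> dist ((T ^^ d) y) x" by simp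
    qed
    then show "\<exists>e>0. \<forall>y\<in>X. dist y x < e \<longrightarrow> e \<le> dist ((T ^^ d) y) x"
      using \<delta>(1) r by (intro exI[of _ "min \<delta> r"]) auto
  qed
  then obtain f where f: "\<forall>d\<in>{0<..<N}. f d > 0 \<and> (\<forall>y\<in>X. dist y x < f d \<longrightarrow> f d \<le> dist ((T ^^ d) y) x)"
    by metis
  define \<epsilon> where "\<epsilon> = Min (insert 1 (f ` {0<..<N}))"
  have fin: "finite (insert 1 (f ` {0<..<N}))" by simp
  have epos: "\<epsilon> > 0" unfolding \<epsilon>_def using f fin by (subst Min_gr_iff) auto
  have ele: "\<And>d. d \<in> {0<..<N} \<Longrightarrow> \<epsilon> \<le> f d" unfolding \<epsilon>_def using fin by (intro Min_le) auto
  have W: "openin (top_of_set X) (X \<inter> ball x \<epsilon>)" by auto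
  have xW: "x \<in> X \<inter> ball x \<epsilon>" using epos assms(4) by auto
  obtain V where V: "openin (top_of_set X) V" "closedin (top_of_set X) V" "x \<in> V" "V \<subseteq> X \<inter> ball x \<epsilon>"
    using assms(2) W xW unfolding zero_dimensional_def by blast
  have "sparse T N V" unfolding sparse_def
  proof (intro ballI allI impI notI)
    fix y d assume y: "y \<in> V" and d: "0 < d \<and> d < N" and t: "(T ^^ d) y \<in> V"
    have dd: "d \<in> {0<..<N}" using d by auto
    have "dist y x < \<epsilon>" using y V(4) by (auto simp: dist_commute)
    then have "dist y x < f d" using ele[OF dd] by simp
    then have "f d \<le> dist ((T ^^ d) y) x" using f dd y V(4) by auto
    moreover have "dist ((T ^^ d) y) x < \<epsilon>" using t V(4) by (auto simp: dist_commute)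
    ultimately show False using ele[OF dd] by simp
  qed
  then show ?thesis using V unfolding clopen_in_def by blast
qed

lemma merge_Sp:
  assumes "T ` X \<subseteq> X" "y \<in> X" "z \<in> X" "y \<noteq> z" "(T ^^ d) y = (T ^^ d) z"
  shows "\<exists>e. 1 \<le> e \<and> e \<le> d \<and> (T ^^ e) z \<in> Sp_l X T"
  using assms(5)
proof (induction d)
  case 0 then show ?case using assms(4) by simp
next
  case (Suc d)
  show ?case
  proof (cases "(T ^^ d) y = (T ^^ d) z")
    case True then show ?thesis using Suc.IH by (meson le_SucI)
  next
    case False
    have "(T ^^ Suc d) z \<in> Sp_l X T" unfolding Sp_l_def
      using False Suc.prems funpow_in[OF assms(1) assms(2), of d] funpow_in[OF assms(1) assms(3), of d]
        funpow_in[OF assms(1) assms(3), of "Suc d"] by auto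
    then show ?thesis by (intro exI[of _ "Suc d"]) auto
  qed
qed

lemma orbit_inj:
  assumes "T ` X \<subseteq> X" "aperiodic X T" "x \<in> X" "(T ^^ a) x = (T ^^ b) x"
  shows "a = b"
proof (rule ccontr)
  assume "a \<noteq> b"
  then consider "a < b" | "b < a" by linarith
  then show False
  proof cases
    case 1
    have "(T ^^ (b - a)) ((T ^^ a) x) = (T ^^ b) x" using 1
      by (metis funpow_add le_add_diff_inverse2 less_imp_le o_apply)
    then show False using assms 1 funpow_in[OF assms(1,3), of a] unfolding aperiodic_def by auto
  next
    case 2
    have "(T ^^ (a - b)) ((T ^^ b) x) = (T ^^ a) x" using 2
      by (metis funpow_add le_add_diff_inverse2 less_imp_le o_apply)
    then show False using assms 2 funpow_in[OF assms(1,3), of b] unfolding aperiodic_def by auto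
  qed
qed


lemma hit:
  assumes img: "T ` X \<subseteq> X" and ap: "aperiodic X T" and fin: "finite (Sp_l X T)" and N: "N \<ge> 1"
    and MX: "M \<subseteq> X" and cov: "X \<subseteq> M \<union> Fz X T N M" and x: "x \<in> X"
  shows "\<exists>k < (card (Sp_l X T) + 2) * N. (T ^^ k) x \<in> M"
proof (rule ccontr)
  define c where "c = card (Sp_l X T)"
  define L where "L = (c + 2) * N"
  assume "\<not> (\<exists>k < (card (Sp_l X T) + 2) * N. (T ^^ k) x \<in> M)"
  then have H: "\<And>k. k < L \<Longrightarrow> (T ^^ k) x \<notin> M" unfolding L_def c_def by blast
  have win: "\<exists>p. (q - 1) * N \<le> p \<and> p < q * N \<and> (T ^^ p) x \<in> Sp_l X T" if q: "q \<in> {1..c+1}" for q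
  proof -
    define K where "K = q * N"
    have K1: "N \<le> K" unfolding K_def using q by simp
    have K2: "K \<le> (c + 1) * N" unfolding K_def using q by (intro mult_le_mono1) simp
    have L2: "L = (c + 1) * N + N" unfolding L_def by simp
    have qm: "(q - 1) * N = K - N" unfolding K_def by (simp add: diff_mult_distrib)
    define j where "j = K - 1"
    have jX: "(T ^^ j) x \<in> X" using funpow_in[OF img x] .
    have "(T ^^ j) x \<notin> M" using H unfolding j_def using K2 L2 N by simp
    then have "(T ^^ j) x \<in> Fz X T N M" using cov jX by blast
    then obtain d where d: "0 < d" "d < N"
      and dc: "(T ^^ d) ((T ^^ j) x) \<in> M \<or> (\<exists>y\<in>M. (T ^^ d) y = (T ^^ j) x)"
      unfolding Fz_def by blast
    show ?thesis
    proof (cases "(T ^^ d) ((T ^^ j) x) \<in> M")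
      case True
      then have "(T ^^ (d + j)) x \<in> M" by (simp add: funpow_add)
      moreover have "d + j < L" unfolding j_def using K1 K2 L2 d N by linarith
      ultimately show ?thesis using H by blast
    next
      case False
      then obtain y where y: "y \<in> M" "(T ^^ d) y = (T ^^ j) x" using dc by blast
      define a where "a = j - d"
      have ja: "j = d + a" unfolding a_def j_def using d K1 by linarith
      define z where "z = (T ^^ a) x"
      have zX: "z \<in> X" unfolding z_def using funpow_in[OF img x] .
      have "a < L" unfolding a_def j_def using K2 L2 N by linarith
      then have "z \<notin> M" unfolding z_def using H by blast
      then have yz: "y \<noteq> z" using y by blast
      have "(T ^^ d) z = (T ^^ j) x" unfolding z_def ja by (simp add: funpow_add)
      then have dz: "(T ^^ d) y = (T ^^ d) z" using y by simp
      have yX: "y \<in> X" using y MX by blast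
      obtain e where e: "1 \<le> e" "e \<le> d" "(T ^^ e) z \<in> Sp_l X T"
        using merge_Sp[OF img yX zX yz dz] by blast
      have "(T ^^ (e + a)) x \<in> Sp_l X T" using e(3) unfolding z_def by (simp add: funpow_add)
      moreover have "(q - 1) * N \<le> e + a" unfolding qm a_def j_def using d K1 e by linarith
      moreover have "e + a < q * N" unfolding K_def[symmetric] a_def j_def using d K1 e by linarith
      ultimately show ?thesis by blast
    qed
  qed
  then obtain p where p: "\<And>q. q \<in> {1..c+1} \<Longrightarrow> (q - 1) * N \<le> p q \<and> p q < q * N \<and> (T ^^ p q) x \<in> Sp_l X T"
    by metis
  define g where "g q = (T ^^ p q) x" for q
  have "inj_on g {1..c+1}"
  proof (rule inj_onI)
    fix q1 q2 assume q1: "q1 \<in> {1..c+1}" and q2: "q2 \<in> {1..c+1}" and eq: "g q1 = g q2"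
    have pe: "p q1 = p q2" using orbit_inj[OF img ap x] eq unfolding g_def by blast
    show "q1 = q2"
    proof (rule ccontr)
      assume "q1 \<noteq> q2"
      then consider "q1 < q2" | "q2 < q1" by linarith
      then show False
      proof cases
        case 1
        then have "q1 * N \<le> (q2 - 1) * N" by (intro mult_le_mono1) linarith
        then show False using p[OF q1] p[OF q2] pe by linarith
      next
        case 2
        then have "q2 * N \<le> (q1 - 1) * N" by (intro mult_le_mono1) linarith
        then show False using p[OF q1] p[OF q2] pe by linarith
      qed
    qed
  qed
  moreover have "g ` {1..c+1} \<subseteq> Sp_l X T" using p unfolding g_def by blast
  ultimately have "card {1..c+1} \<le> card (Sp_l X T)" using card_inj_on_le fin by blast
  then show False unfolding c_def by simp
qed


lemma tower:
  assumes surj: "T ` X = X" and ct: "continuous_on X T" and cpt: "compact X"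
    and B: "clopen_in X B" "B \<noteq> {}" "sparse T N B"
  shows "open_rokhlin_tower X T N (\<lambda>k. {x\<in>X. (T ^^ k) x \<in> B})"
proof -
  have img: "T ` X \<subseteq> X" using surj by simp
  have BX: "B \<subseteq> X" using B(1) unfolding clopen_in_def using openin_imp_subset by blast
  have cl: "clopen_in X {x\<in>X. (T ^^ k) x \<in> B}" for k using clopen_preimage[OF ct img B(1)] .
  have clo: "closure {x\<in>X. (T ^^ k) x \<in> B} = {x\<in>X. (T ^^ k) x \<in> B}" for k
  proof -
    have "closed X" using cpt compact_imp_closed by blast
    then have "closed {x\<in>X. (T ^^ k) x \<in> B}" using cl[of k] closedin_closed_trans unfolding clopen_in_def by blast
    then show ?thesis by (rule closure_closed)
  qed
  show ?thesis unfolding open_rokhlin_tower_def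
  proof (intro conjI allI impI)
    fix k assume "k < N"
    obtain b where b: "b \<in> B" using B(2) by blast
    then have "b \<in> (T ^^ k) ` X" using funpow_surj[OF surj] BX by blast
    then show "{x\<in>X. (T ^^ k) x \<in> B} \<noteq> {}" using b by auto
    show "{x\<in>X. (T ^^ k) x \<in> B} \<subseteq> X" by blast
    show "openin (top_of_set X) {x\<in>X. (T ^^ k) x \<in> B}" using cl[of k] unfolding clopen_in_def by blast
  next
    fix k assume k: "1 \<le> k \<and> k < N"
    then have "k = Suc (k - 1)" by simp
    then have e: "(T ^^ k) x = (T ^^ (k - 1)) (T x)" for x by (metis comp_apply funpow_Suc_right)
    show "{x\<in>X. (T ^^ k) x \<in> B} = {x\<in>X. T x \<in> {x\<in>X. (T ^^ (k - 1)) x \<in> B}}"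
    proof (intro set_eqI iffI)
      fix x assume "x \<in> {x\<in>X. (T ^^ k) x \<in> B}"
      then show "x \<in> {x\<in>X. T x \<in> {x\<in>X. (T ^^ (k - 1)) x \<in> B}}" using img e[of x] by auto
    next
      fix x assume "x \<in> {x\<in>X. T x \<in> {x\<in>X. (T ^^ (k - 1)) x \<in> B}}"
      then show "x \<in> {x\<in>X. (T ^^ k) x \<in> B}" using e[of x] by auto
    qed
  next
    fix i j assume ij: "i < N" "j < N" "i \<noteq> j"
    have dis: "{x\<in>X. (T ^^ i) x \<in> B} \<inter> {x\<in>X. (T ^^ j) x \<in> B} = {}"
      if "i < j" "j < N" for i j
    proof (rule ccontr)
      assume "{x\<in>X. (T ^^ i) x \<in> B} \<inter> {x\<in>X. (T ^^ j) x \<in> B} \<noteq> {}"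
      then obtain x where x: "(T ^^ i) x \<in> B" "(T ^^ j) x \<in> B" by blast
      have "(T ^^ j) x = (T ^^ (j - i)) ((T ^^ i) x)" using that
        by (metis funpow_add le_add_diff_inverse2 less_imp_le o_apply)
      moreover have "0 < j - i \<and> j - i < N" using that by linarith
      ultimately show False using B(3) x unfolding sparse_def by metis
    qed
    show "closure {x\<in>X. (T ^^ i) x \<in> B} \<inter> closure {x\<in>X. (T ^^ j) x \<in> B} = {}"
    proof (cases "i < j")
      case True then show ?thesis unfolding clo using dis ij by blast
    next
      case False
      then have "j < i" using ij by linarith
      then have "{x\<in>X. (T ^^ j) x \<in> B} \<inter> {x\<in>X. (T ^^ i) x \<in> B} = {}" using dis ij by blast
      then show ?thesis unfolding clo by blast
    qed
  qed
qed


theorem theorem4p7: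
  fixes X :: "'a::metric_space set" and T :: "'a \<Rightarrow> 'a"
  assumes "compact X" and "zero_dimensional X"
    and "local_homeomorphism X T" and "T ` X = X" and "aperiodic X T"
    and "finite (Sp_l X T)"
  shows "rokhlin_dim_le X T (2 * card (Sp_l X T) + 1)"
  unfolding rokhlin_dim_le_def
proof (intro allI impI)
  fix N :: nat assume N: "N \<ge> 1"
  define c where "c = card (Sp_l X T)"
  have img: "T ` X \<subseteq> X" using assms(4) by simp
  have ct: "continuous_on X T" using lh_cont assms(3) by blast
  show "\<exists>m tw. m \<le> 2 * card (Sp_l X T) + 1 + 1 \<and> (\<forall>i<m. open_rokhlin_tower X T N (tw i)) \<and>
          (\<Union>i<m. \<Union>k<N. tw i k) = X"
  proof (cases "X = {}")
    case True
    then show ?thesis by (intro exI[of _ 0]) auto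
  next
    case False
    have "\<forall>x\<in>X. \<exists>V. clopen_in X V \<and> sparse T N V \<and> x \<in> V"
      using sparse_nbhd[OF assms(3,2,5)] by blast
    then obtain V where V: "\<And>x. x \<in> X \<Longrightarrow> clopen_in X (V x) \<and> sparse T N (V x) \<and> x \<in> V x"
      by metis
    have "\<forall>x\<in>X. \<exists>Ob. open Ob \<and> V x = X \<inter> Ob"
      using V unfolding clopen_in_def openin_open by blast
    then obtain Ob where Ob: "\<And>x. x \<in> X \<Longrightarrow> open (Ob x) \<and> V x = X \<inter> Ob x" by metis
    have "X \<subseteq> (\<Union>x\<in>X. Ob x)" using V Ob by blast
    then obtain D where D: "D \<subseteq> X" "finite D" "X \<subseteq> (\<Union>x\<in>D. Ob x)"
      using compactE_image[OF assms(1), of X Ob] Ob by blast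
    have "\<exists>M. clopen_in X M \<and> sparse T N M \<and> \<Union>(V ` D) \<subseteq> M \<union> Fz X T N M"
      using greedy[OF assms(3,1), of "V ` D"] D V by blast
    then obtain M where M: "clopen_in X M" "sparse T N M" "\<Union>(V ` D) \<subseteq> M \<union> Fz X T N M" by blast
    have MX: "M \<subseteq> X" using M(1) unfolding clopen_in_def using openin_imp_subset by blast
    have "X \<subseteq> \<Union>(V ` D)" using D Ob by blast
    then have cov: "X \<subseteq> M \<union> Fz X T N M" using M(3) by blast
    have hitx: "\<exists>k < (c + 2) * N. (T ^^ k) x \<in> M" if "x \<in> X" for x
      using hit[OF img assms(5,6) N MX cov that] unfolding c_def .
    have Mne: "M \<noteq> {}" using hitx False by blast
    define C where "C q = {x\<in>X. (T ^^ (q * N)) x \<in> M \<and> (\<forall>i < q * N. (T ^^ i) x \<notin> M)}" for q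
    define B where "B q = (if C q = {} then M else C q)" for q
    have Cc: "clopen_in X (C q)" for q
    proof -
      have "C q = {x\<in>X. (T ^^ (q * N)) x \<in> M} - (\<Union>i<q*N. {x\<in>X. (T ^^ i) x \<in> M})"
        unfolding C_def by blast
      moreover have "clopen_in X (\<Union>i<q*N. {x\<in>X. (T ^^ i) x \<in> M})"
        by (rule clopen_UN) (simp_all add: clopen_preimage[OF ct img M(1)])
      ultimately show ?thesis using clopen_Diff[OF clopen_preimage[OF ct img M(1)]] by simp
    qed
    have Cs: "sparse T N (C q)" for q
    proof (cases "q = 0")
      case True
      then have "C q = M" unfolding C_def using MX by auto
      then show ?thesis using M(2) by simp
    next
      case False
      then have qN: "N \<le> q * N" by simp
      show ?thesis unfolding sparse_def
      proof (intro ballI allI impI notI)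
        fix y d assume y: "y \<in> C q" and d: "0 < d \<and> d < N" and t: "(T ^^ d) y \<in> C q"
        have "(T ^^ (q * N - d)) ((T ^^ d) y) = (T ^^ (q * N)) y"
          using d qN by (metis funpow_add le_add_diff_inverse2 less_imp_le o_apply order.strict_trans2)
        then have "(T ^^ (q * N - d)) ((T ^^ d) y) \<in> M" using y unfolding C_def by auto
        moreover have "q * N - d < q * N" using d qN by linarith
        ultimately show False using t unfolding C_def by blast
      qed
    qed
    have Bp: "clopen_in X (B q) \<and> B q \<noteq> {} \<and> sparse T N (B q)" for q
      unfolding B_def using Cc Cs M Mne by auto
    define tw where "tw q k = {x\<in>X. (T ^^ k) x \<in> B q}" for q k
    have towers: "\<forall>i<c+2. open_rokhlin_tower X T N (tw i)"
      unfolding tw_def using tower[OF assms(4) ct assms(1)] Bp by blast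
    have "(\<Union>i<c+2. \<Union>k<N. tw i k) = X"
    proof
      show "(\<Union>i<c+2. \<Union>k<N. tw i k) \<subseteq> X" unfolding tw_def by blast
      show "X \<subseteq> (\<Union>i<c+2. \<Union>k<N. tw i k)"
      proof
        fix x assume x: "x \<in> X"
        define h where "h = (LEAST k. (T ^^ k) x \<in> M)"
        obtain k0 where k0: "k0 < (c + 2) * N" "(T ^^ k0) x \<in> M" using hitx[OF x] by blast
        have hM: "(T ^^ h) x \<in> M" unfolding h_def using k0(2) by (rule LeastI)
        have hle: "h \<le> k0" unfolding h_def using k0(2) by (rule Least_le)
        have hmin: "\<And>i. i < h \<Longrightarrow> (T ^^ i) x \<notin> M" unfolding h_def using not_less_Least by blast
        define q where "q = h div N"
        define r where "r = h mod N"
        have hqr: "h = q * N + r" unfolding q_def r_def by simp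
        have rN: "r < N" unfolding r_def using N by simp
        have qc: "q < c + 2" unfolding q_def using hle k0(1) N
          by (simp add: less_mult_imp_div_less order.strict_trans1)
        have rX: "(T ^^ r) x \<in> X" using funpow_in[OF img x] .
        have "(T ^^ (q * N)) ((T ^^ r) x) \<in> M" using hM hqr by (simp add: funpow_add)
        moreover have "(T ^^ i) ((T ^^ r) x) \<notin> M" if "i < q * N" for i
        proof -
          have "(T ^^ i) ((T ^^ r) x) = (T ^^ (i + r)) x" by (simp add: funpow_add)
          moreover have "i + r < h" using that hqr by linarith
          ultimately show ?thesis using hmin by simp
        qed
        ultimately have inC: "(T ^^ r) x \<in> C q" unfolding C_def using rX by blast
        then have "B q = C q" unfolding B_def by auto
        then have "x \<in> tw q r" unfolding tw_def using inC x by simp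
        then show "x \<in> (\<Union>i<c+2. \<Union>k<N. tw i k)" using qc rN by blast
      qed
    qed
    moreover have "c + 2 \<le> 2 * card (Sp_l X T) + 1 + 1" unfolding c_def by simp
    ultimately show ?thesis using towers by blast
  qed
qed

end
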